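(* Let $h:\mathbb{C}\to\mathbb{C}$ be an even entire function, and suppose there are constants $\theta<1$, $K>0$ and $y_0>0$ such that $|h(y)|\le K\,y^{\theta}$ for all real $y\ge y_0$. Then: (1) For every $z$ with $\operatorname{Re}(z)>0$ the integral $\int_{0}^{\infty}\frac{h(y)}{y^2+z^2}\,dy$ converges absolutely, and the function $$h^{\#}(z):=z\int_{0}^{\infty}\frac{h(y)}{y^2+z^2}\,dy$$ is analytic on the half-plane $\operatorname{Re}(z)>0$. (2) $h^{\#}$ extends (analytically continues) to an entire function on $\mathbb{C}$.
   Context: $h^{\#}$ is called the Poisson transform of $h$. *)

theory Defs
  imports "HOL-Complex_Analysis.Complex_Analysis"
begin

definition poisson_transform :: "(complex \<Rightarrow> complex) \<Rightarrow> complex \<Rightarrow> complex" where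
  "poisson_transform h z =
     z * integral {0..} (\<lambda>y::real. h (complex_of_real y) / ((complex_of_real y)\<^sup>2 + z\<^sup>2))"

end

theory Submission
  imports Defs
begin


definition pf :: "(complex \<Rightarrow> complex) \<Rightarrow> complex \<Rightarrow> real \<Rightarrow> complex" where
  "pf h z = (\<lambda>y. h (complex_of_real y) / ((complex_of_real y)\<^sup>2 + z\<^sup>2))"

lemma den_nz_Re:
  assumes "Re z \<noteq> 0" shows "(complex_of_real y)\<^sup>2 + z\<^sup>2 \<noteq> 0"
proof
  assume "(complex_of_real y)\<^sup>2 + z\<^sup>2 = 0"
  then have a: "y^2 + Re z ^2 - Im z ^2 = 0" and b: "2 * Re z * Im z = 0"
    by (auto simp: complex_eq_iff power2_eq_square)
  from b assms have "Im z = 0" by simp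
  with a assms show False by (smt (verit) zero_less_power2 power2_eq_square zero_le_square)
qed

lemma den_lower:
  fixes y r R :: real
  assumes "R > 0" "y \<ge> R" "norm z \<le> r" "r < R"
  shows "norm ((complex_of_real y)\<^sup>2 + z\<^sup>2) \<ge> ((R^2 - r^2)/R^2) * y^2"
proof -
  have r0: "r \<ge> 0" using assms(3) norm_ge_zero order_trans by blast
  have "norm ((complex_of_real y)\<^sup>2 + z\<^sup>2) \<ge> norm ((complex_of_real y)\<^sup>2) - norm (z\<^sup>2)"
    by (metis norm_diff_ineq minus_diff_eq diff_minus_eq_add norm_minus_cancel)
  also have "norm ((complex_of_real y)\<^sup>2) = y^2" by (simp add: norm_power)
  also have "norm (z^2) = norm z ^2" by (simp add: norm_power)
  finally have 1: "norm ((complex_of_real y)\<^sup>2 + z\<^sup>2) \<ge> y^2 - norm z^2" .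
  have "norm z ^2 \<le> r^2" using assms(3) by (simp add: power_mono)
  moreover have "R^2 \<le> y^2" using assms by (simp add: power_mono)
  moreover have "((R^2 - r^2)/R^2) * y^2 = y^2 - r^2 * (y^2/R^2)" using assms by (simp add: field_simps)
  moreover have "r^2 * (y^2/R^2) \<ge> r^2 * 1"
    using \<open>R^2 \<le> y^2\<close> assms(1) by (intro mult_left_mono) (auto simp: field_simps)
  ultimately show ?thesis using 1 by linarith
qed

locale poi =
  fixes h :: "complex \<Rightarrow> complex" and \<theta> K y0 :: real
  assumes entire: "h holomorphic_on UNIV"
    and even: "\<And>z. h (- z) = h z"
    and theta: "\<theta> < 1" and K: "K > 0" and y0: "y0 > 0"
    and bound: "\<And>y::real. y \<ge> y0 \<Longrightarrow> norm (h (complex_of_real y)) \<le> K * y powr \<theta>"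
begin

lemma hcont: "continuous_on A h"
  using entire holomorphic_on_imp_continuous_on holomorphic_on_subset by blast

lemma pf_bound:
  fixes y r R :: real
  assumes "R \<ge> y0" "y \<ge> R" "norm z \<le> r" "r < R"
  shows "norm (pf h z y) \<le> (K / ((R^2 - r^2)/R^2)) * y powr (\<theta> - 2)"
proof -
  have R0: "R > 0" using assms y0 by linarith
  have y00: "y > 0" using R0 assms by linarith
  have r0: "r \<ge> 0" using assms(3) norm_ge_zero order_trans by blast
  define c where "c = (R^2 - r^2)/R^2"
  have c0: "c > 0" unfolding c_def using R0 r0 assms(4) by (simp add: power_strict_mono)
  have d: "norm ((complex_of_real y)\<^sup>2 + z\<^sup>2) \<ge> c * y^2" unfolding c_def
    using den_lower[OF R0 assms(2-4)] .
  have dpos: "c * y^2 > 0" using c0 y00 by simp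
  have "norm (pf h z y) = norm (h (complex_of_real y)) / norm ((complex_of_real y)\<^sup>2 + z\<^sup>2)"
    by (simp add: pf_def norm_divide)
  also have "\<dots> \<le> (K * y powr \<theta>) / (c * y^2)"
    using bound[of y] assms d dpos K by (intro frac_le) auto
  also have "\<dots> = (K / c) * y powr (\<theta> - 2)"
    using y00 c0 by (simp add: powr_diff powr_numeral field_simps)
  finally show ?thesis unfolding c_def .
qed

lemma pf_cont: "(\<And>y. y \<in> A \<Longrightarrow> (complex_of_real y)\<^sup>2 + z\<^sup>2 \<noteq> 0) \<Longrightarrow> continuous_on A (pf h z)"
  unfolding pf_def
  by (auto intro!: continuous_intros continuous_on_compose2[OF hcont[of UNIV]])

lemma den_nz_big: "R > 0 \<Longrightarrow> y \<ge> R \<Longrightarrow> norm z < R \<Longrightarrow> (complex_of_real y)\<^sup>2 + z\<^sup>2 \<noteq> 0"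
proof -
  assume a: "R > 0" "y \<ge> R" "norm z < R"
  have "norm ((complex_of_real y)\<^sup>2 + z\<^sup>2) \<ge> ((R^2 - norm z^2)/R^2) * y^2"
    using den_lower[OF a(1,2) _ a(3)] by simp
  moreover have "((R^2 - norm z^2)/R^2) * y^2 > 0"
    using a by (simp add: power_strict_mono)
  ultimately show ?thesis by auto
qed

lemma powr_hasint: "a > 0 \<Longrightarrow> ((\<lambda>y. C * y powr (\<theta>-2)) has_integral C * (a powr (\<theta>-1) / (1-\<theta>))) {a..}"
proof -
  assume a: "a > 0"
  have "\<theta> - 2 < -1" using theta by simp
  from has_integral_mult_right[OF has_integral_powr_to_inf[OF this a], of C]
  moreover have "- (C * (a powr (\<theta> - 2 + 1) / (\<theta> - 2 + 1))) = C * (a powr (\<theta>-1) / (1-\<theta>))"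
    using theta by (simp add: minus_divide_right)
  ultimately show ?thesis by (simp add: algebra_simps)
qed

lemma tail_absint:
  assumes "R \<ge> y0" "norm z < R"
  shows "pf h z absolutely_integrable_on {R..}"
proof (rule measurable_bounded_by_integrable_imp_absolutely_integrable)
  have R0: "R > 0" using assms y0 by linarith
  show "pf h z \<in> borel_measurable (lebesgue_on {R..})"
    by (intro continuous_imp_measurable_on_sets_lebesgue pf_cont den_nz_big[OF R0]) (use assms in auto)
  show "{R..} \<in> sets lebesgue" by simp
  show "(\<lambda>y. (K / ((R^2 - norm z^2)/R^2)) * y powr (\<theta>-2)) integrable_on {R..}"
    using powr_hasint[OF R0] by blast
  show "norm (pf h z y) \<le> (K / ((R^2 - norm z^2)/R^2)) * y powr (\<theta>-2)" if "y \<in> {R..}" for y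
    using pf_bound[OF assms(1) _ order_refl assms(2)] that by auto
qed

lemma int_split:
  fixes f :: "real \<Rightarrow> complex"
  assumes "a \<le> b" "f integrable_on {a..b}" "f integrable_on {b..}"
  shows "(f has_integral (integral {a..b} f + integral {b..} f)) {a..}"
proof -
  have "(f has_integral (integral {a..b} f + integral {b..} f)) ({a..b} \<union> {b..})"
  proof (rule has_integral_Un)
    show "negligible ({a..b} \<inter> {b..})"
      using assms(1) by (simp add: negligible_sing Int_atLeastAtMost)
  qed (use assms in auto)
  moreover have "{a..b} \<union> {b..} = {a..}" using assms(1) by auto
  ultimately show ?thesis by simp
qed

lemma tail_bound:
  assumes "R \<ge> y0" "norm z \<le> r" "r < R" "b \<ge> R"
  shows "norm (integral {b..} (pf h z)) \<le> (K / ((R^2 - r^2)/R^2)) * (b powr (\<theta>-1) / (1-\<theta>))"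
proof -
  have b0: "b > 0" using assms y0 by linarith
  have "norm (integral {b..} (pf h z)) \<le> integral {b..} (\<lambda>y. (K / ((R^2 - r^2)/R^2)) * y powr (\<theta>-2))"
  proof (rule integral_norm_bound_integral)
    show "pf h z integrable_on {b..}"
      using tail_absint[of b z] assms set_lebesgue_integral_eq_integral(1) by force
    show "(\<lambda>y. (K / ((R^2 - r^2)/R^2)) * y powr (\<theta>-2)) integrable_on {b..}"
      using powr_hasint[OF b0] by blast
    show "norm (pf h z y) \<le> (K / ((R^2 - r^2)/R^2)) * y powr (\<theta>-2)" if "y \<in> {b..}" for y
      using pf_bound[OF assms(1) _ assms(2,3)] that assms(4) by auto
  qed
  also have "\<dots> = (K / ((R^2 - r^2)/R^2)) * (b powr (\<theta>-1) / (1-\<theta>))"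
    using powr_hasint[OF b0] by blast
  finally show ?thesis .
qed

end


context poi begin

lemma tail_int: "b \<ge> y0 \<Longrightarrow> norm z < b \<Longrightarrow> pf h z integrable_on {b..}"
  using tail_absint[of b z] set_lebesgue_integral_eq_integral(1) by force

lemma seg_int: "a > 0 \<Longrightarrow> norm z < a \<Longrightarrow> pf h z integrable_on {a..b}"
  by (intro integrable_continuous_interval pf_cont den_nz_big[of a]) auto

lemma pf_deriv: "(complex_of_real t)\<^sup>2 + x\<^sup>2 \<noteq> 0 \<Longrightarrow>
   ((\<lambda>x. pf h x t) has_field_derivative (- h (complex_of_real t) * (2*x) / ((complex_of_real t)\<^sup>2 + x\<^sup>2)^2)) (at x within U)"
  unfolding pf_def
  by (auto intro!: derivative_eq_intros simp: power2_eq_square field_simps)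

lemma fin_hol:
  assumes "R > 0" "r < R"
  shows "(\<lambda>z. integral {R..b} (pf h z)) holomorphic_on cball 0 r"
proof -
  have dnz: "(complex_of_real t)\<^sup>2 + x\<^sup>2 \<noteq> 0" if "x \<in> cball 0 r" "t \<in> {R..b}" for x t
    using den_nz_big[OF assms(1), of t x] that assms by auto
  have "(\<lambda>z. integral (cbox R b) (pf h z)) holomorphic_on cball 0 r"
  proof (rule leibniz_rule_holomorphic)
    show "((\<lambda>x. pf h x t) has_field_derivative (- h (complex_of_real t) * (2*x) / ((complex_of_real t)\<^sup>2 + x\<^sup>2)^2)) (at x within cball 0 r)"
      if "x \<in> cball 0 r" "t \<in> cbox R b" for x t
      using pf_deriv dnz that by auto
    show "pf h x integrable_on cbox R b" if "x \<in> cball 0 r" for x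
      using seg_int[OF assms(1), of x b] that assms by auto
    show "continuous_on (cball 0 r \<times> cbox R b) (\<lambda>(x, t). - h (complex_of_real t) * (2*x) / ((complex_of_real t)\<^sup>2 + x\<^sup>2)^2)"
      using dnz
      by (auto simp: split_beta intro!: continuous_intros continuous_on_compose2[OF hcont[of UNIV]])
  qed (simp add: convex_cball)
  then show ?thesis by simp
qed

lemma tail_hol_r:
  assumes "R \<ge> y0" "r < R"
  shows "(\<lambda>z. integral {R..} (pf h z)) holomorphic_on ball 0 r"
proof -
  have R0: "R > 0" using assms y0 by linarith
  define C where "C = K / ((R^2 - r^2)/R^2)"
  have ul: "uniform_limit (cball 0 r) (\<lambda>n z. integral {R..R + real n} (pf h z)) (\<lambda>z. integral {R..} (pf h z)) sequentially"
  proof (unfold uniform_limit_iff, intro allI impI)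
    fix e :: real assume e: "e > 0"
    have "filterlim (\<lambda>n::nat. R + real n) at_top sequentially" by real_asymp
    then have "((\<lambda>n::nat. (R + real n) powr (\<theta>-1)) \<longlongrightarrow> 0) sequentially"
      using theta by (intro tendsto_neg_powr) auto
    then have "((\<lambda>n::nat. C * ((R + real n) powr (\<theta>-1) / (1-\<theta>))) \<longlongrightarrow> C * (0 / (1-\<theta>))) sequentially"
      using theta by (intro tendsto_intros) auto
    then have "\<forall>\<^sub>F n in sequentially. C * ((R + real n) powr (\<theta>-1) / (1-\<theta>)) < e"
      using e by (simp add: order_tendsto_iff)
    then show "\<forall>\<^sub>F n in sequentially. \<forall>x\<in>cball 0 r. dist (integral {R..R + real n} (pf h x)) (integral {R..} (pf h x)) < e"
    proof eventually_elim
      case (elim n)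
      show ?case
      proof
        fix x :: complex assume x: "x \<in> cball 0 r"
        have "(pf h x has_integral (integral {R..R + real n} (pf h x) + integral {R + real n..} (pf h x))) {R..}"
          by (rule int_split) (use x assms R0 in \<open>auto intro!: seg_int tail_int\<close>)
        then have eq: "integral {R..} (pf h x) = integral {R..R + real n} (pf h x) + integral {R + real n..} (pf h x)"
          by (rule integral_unique)
        have "norm (integral {R + real n..} (pf h x)) \<le> C * ((R + real n) powr (\<theta>-1) / (1-\<theta>))"
          unfolding C_def by (rule tail_bound) (use x assms in auto)
        then show "dist (integral {R..R + real n} (pf h x)) (integral {R..} (pf h x)) < e"
          using elim by (simp add: eq dist_norm)
      qed
    qed
  qed
  show ?thesis
  proof (rule holomorphic_uniform_limit[OF _ ul])
    show "\<forall>\<^sub>F n in sequentially. continuous_on (cball 0 r) (\<lambda>z. integral {R..R + real n} (pf h z)) \<and>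
          (\<lambda>z. integral {R..R + real n} (pf h z)) holomorphic_on ball 0 r"
      using fin_hol[OF R0 assms(2)]
      by (auto intro!: always_eventually holomorphic_on_imp_continuous_on intro: holomorphic_on_subset[OF _ ball_subset_cball])
  qed auto
qed

lemma tail_hol:
  assumes "R \<ge> y0"
  shows "(\<lambda>z. integral {R..} (pf h z)) holomorphic_on ball 0 R"
proof -
  have "(\<lambda>z. integral {R..} (pf h z)) field_differentiable at z" if z: "z \<in> ball 0 R" for z
  proof -
    define r where "r = (norm z + R)/2"
    have "r < R" "z \<in> ball 0 r" using z by (auto simp: r_def)
    with tail_hol_r[OF assms \<open>r < R\<close>] show ?thesis
      using holomorphic_on_imp_differentiable_at by blast
  qed
  then show ?thesis using holomorphic_on_open open_ball
    by (simp add: field_differentiable_def holomorphic_on_open)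
qed

end



definition arc :: "real \<Rightarrow> real \<Rightarrow> complex" where "arc R = part_circlepath 0 R pi (2*pi)"

lemma arc_start: "pathstart (arc R) = - complex_of_real R"
  by (simp add: arc_def pathstart_part_circlepath exp_pi_i')
lemma arc_finish: "pathfinish (arc R) = complex_of_real R"
proof -
  have "exp (\<i> * (2 * complex_of_real pi)) = 1" using exp_two_pi_i by (simp add: mult.commute mult.left_commute)
  then show ?thesis by (simp add: arc_def pathfinish_part_circlepath)
qed
lemma arc_valid: "valid_path (arc R)"
  by (simp add: arc_def)
lemma arc_image_sphere: "R \<ge> 0 \<Longrightarrow> path_image (arc R) \<subseteq> sphere 0 R"
  unfolding arc_def by (rule path_image_part_circlepath_subset) auto
lemma arc_image_Im: "R \<ge> 0 \<Longrightarrow> w \<in> path_image (arc R) \<Longrightarrow> Im w \<le> 0"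
proof -
  assume R: "R \<ge> 0" and w: "w \<in> path_image (arc R)"
  then obtain x where x: "pi \<le> x" "x \<le> 2*pi" "w = complex_of_real R * exp (\<i> * complex_of_real x)"
    unfolding arc_def by (auto simp: path_image_part_circlepath)
  have "sin x \<le> 0"
  proof (cases "x = 2*pi")
    case True then show ?thesis by simp
  next
    case False then show ?thesis using x by (intro sin_le_zero) auto
  qed
  then show ?thesis using x R by (simp add: Im_exp mult_nonneg_nonpos)
qed

context poi begin

lemma arc_hol:
  assumes R: "R > 0"
  shows "(\<lambda>z. contour_integral (arc R) (\<lambda>w. h w / (w - \<i>*z))) holomorphic_on ball 0 R"
proof -
  define Fc where "Fc w = contour_integral (arc R) (\<lambda>u. h u / (u - w))" for w
  have disj: "w \<notin> path_image (arc R)" if "w \<in> ball 0 R" for w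
    using arc_image_sphere[of R] R that by auto
  have "\<exists>f'. (Fc has_field_derivative f') (at w)" if w: "w \<in> ball 0 R" for w
  proof -
    have c1: "continuous_on (path_image (arc R)) h" by (rule hcont)
    have c2: "\<And>t. t \<in> {0..1} \<Longrightarrow> norm (vector_derivative (arc R) (at t)) \<le> R*pi"
      using R by (simp add: arc_def vector_derivative_part_circlepath norm_mult)
    have c3: "((\<lambda>u. h u / (u - v) ^ 1) has_contour_integral Fc v) (arc R)" if "v \<in> ball 0 R - path_image (arc R)" for v
    proof -
      have "(\<lambda>u. h u / (u - v)) contour_integrable_on (arc R)"
        by (rule contour_integrable_holomorphic_simple[where S="- {v}"])
           (use that in \<open>auto intro!: holomorphic_intros holomorphic_on_subset[OF entire] simp: arc_valid\<close>)
      then show ?thesis unfolding Fc_def by (simp add: has_contour_integral_integral)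
    qed
    have c4: "w \<in> ball 0 R - path_image (arc R)" using w disj by auto
    show ?thesis
      using Cauchy_next_derivative(2)[where f'=h and \<gamma>="arc R" and B="R*pi" and S="ball 0 R" and f=Fc and k=1 and w=w,
        OF c1 c2 c3 _ _ arc_valid c4] by auto
  qed
  then have "Fc holomorphic_on ball 0 R" by (simp add: holomorphic_on_open)
  then have "(Fc \<circ> (\<lambda>z. \<i>*z)) holomorphic_on ball 0 R"
    by (intro holomorphic_on_compose holomorphic_intros holomorphic_on_subset[OF \<open>Fc holomorphic_on ball 0 R\<close>]) (auto simp: norm_mult)
  then show ?thesis by (simp add: Fc_def o_def)
qed

lemma pair_id:
  assumes "Re z \<noteq> 0"
  shows "h (complex_of_real x) / (complex_of_real x - \<i>*z) + h (complex_of_real (-x)) / (complex_of_real (-x) - \<i>*z)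
         = 2*\<i>*z * pf h z x"
proof -
  have n1: "complex_of_real x - \<i>*z \<noteq> 0" using assms by (auto simp: complex_eq_iff)
  have n2: "complex_of_real x + \<i>*z \<noteq> 0" using assms by (auto simp: complex_eq_iff)
  have n3: "(complex_of_real x)\<^sup>2 + z\<^sup>2 \<noteq> 0" using den_nz_Re[OF assms] .
  have e: "(complex_of_real x)\<^sup>2 + z\<^sup>2 = (complex_of_real x - \<i>*z) * (complex_of_real x + \<i>*z)"
    by (simp add: power2_eq_square algebra_simps)
  have hm: "h (complex_of_real (-x)) = h (complex_of_real x)" using even[of "complex_of_real x"] by simp
  have g: "H/a + H/(-b) = H*(b-a)/(a*b)" if "a \<noteq> 0" "b \<noteq> 0" for a b H :: complex
    using that by (simp add: field_simps)
  have m: "complex_of_real (-x) - \<i>*z = - (complex_of_real x + \<i>*z)" by simp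
  show ?thesis unfolding pf_def hm e m g[OF n1 n2] by (simp add: algebra_simps)
qed

lemma line_eq:
  assumes z: "Re z > 0" and R: "R > 0"
  shows "z * integral {0..R} (pf h z) = (1/(2*\<i>)) * contour_integral (linepath (- complex_of_real R) (complex_of_real R)) (\<lambda>w. h w / (w - \<i>*z))"
proof -
  define q where "q = (\<lambda>x. h (complex_of_real x) / (complex_of_real x - \<i>*z))"
  have qc: "continuous_on A q" for A
    unfolding q_def using z
    by (auto simp: complex_eq_iff intro!: continuous_intros continuous_on_compose2[OF hcont[of UNIV]])
  have qc2: "continuous_on A (\<lambda>x. q (-x))" for A
    by (rule continuous_on_compose2[OF qc[of UNIV]]) (auto intro: continuous_intros)
  define I1 where "I1 = integral {0..R} q"
  define I2 where "I2 = integral {0..R} (\<lambda>x. q (-x))"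
  have h1: "(q has_integral I1) {0..R}" unfolding I1_def
    by (intro integrable_integral integrable_continuous_interval qc)
  have h2: "((\<lambda>x. q (-x)) has_integral I2) {0..R}" unfolding I2_def
    by (intro integrable_integral integrable_continuous_interval qc2)
  have h2': "(q has_integral I2) {-R..0}"
    using has_integral_reflect_real[where f="\<lambda>x. q (-x)" and i=I2 and a=0 and b=R] h2 by simp
  have hall: "(q has_integral I2 + I1) {-R..R}"
    by (rule has_integral_combine[OF _ _ h2' h1]) (use R in auto)
  have "contour_integral (linepath (- complex_of_real R) (complex_of_real R)) (\<lambda>w. h w / (w - \<i>*z))
        = integral {-R..R} q"
    using contour_integral_linepath_Reals_eq[of "- complex_of_real R" "complex_of_real R" "\<lambda>w. h w / (w - \<i>*z)"] R
    by (simp add: q_def)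
  also have "\<dots> = I2 + I1" using hall by (rule integral_unique)
  finally have ci: "contour_integral (linepath (- complex_of_real R) (complex_of_real R)) (\<lambda>w. h w / (w - \<i>*z)) = I2 + I1" .
  have "((\<lambda>x. q x + q (-x)) has_integral I1 + I2) {0..R}" using h1 h2 by (rule has_integral_add)
  moreover have "q x + q (-x) = 2*\<i>*z * pf h z x" for x
    unfolding q_def using pair_id[of z x] z by simp
  ultimately have "((\<lambda>x. 2*\<i>*z * pf h z x) has_integral I1 + I2) {0..R}" by simp
  then have "((\<lambda>x. (1/(2*\<i>*z)) * (2*\<i>*z * pf h z x)) has_integral (1/(2*\<i>*z)) * (I1 + I2)) {0..R}"
    by (rule has_integral_mult_right)
  moreover have "z \<noteq> 0" using z by auto
  ultimately have "(pf h z has_integral (1/(2*\<i>*z)) * (I1 + I2)) {0..R}" by simp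
  then have "integral {0..R} (pf h z) = (1/(2*\<i>*z)) * (I1 + I2)" by (rule integral_unique)
  then show ?thesis using ci \<open>z \<noteq> 0\<close> by (simp add: field_simps)
qed

lemma cauchy_eq:
  assumes z: "Re z > 0" and R: "R > 0"
  shows "contour_integral (linepath (- complex_of_real R) (complex_of_real R)) (\<lambda>w. h w / (w - \<i>*z))
       = contour_integral (arc R) (\<lambda>w. h w / (w - \<i>*z))"
proof -
  define S where "S = {w. Im w < Re z}"
  define f where "f = (\<lambda>w. h w / (w - \<i>*z))"
  define L where "L = linepath (- complex_of_real R) (complex_of_real R)"
  have hol: "f holomorphic_on S" unfolding f_def S_def
    by (auto intro!: holomorphic_intros holomorphic_on_subset[OF entire] simp: complex_eq_iff)
  have oS: "open S" and cS: "convex S" unfolding S_def by (auto simp: open_halfspace_Im_lt convex_halfspace_Im_lt)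
  have Limg: "path_image L \<subseteq> S" unfolding L_def path_image_linepath
    by (rule closed_segment_subset[OF _ _ cS]) (use z in \<open>auto simp: S_def\<close>)
  have Aimg: "path_image (arc R) \<subseteq> S" using arc_image_Im[of R] R z by (force simp: S_def)
  have vL: "valid_path L" by (simp add: L_def)
  have "(f has_contour_integral 0) (L +++ reversepath (arc R))"
  proof (rule Cauchy_theorem_convex_simple[OF hol cS])
    show "valid_path (L +++ reversepath (arc R))"
      by (intro valid_path_join) (auto simp: vL arc_valid L_def arc_finish)
    show "path_image (L +++ reversepath (arc R)) \<subseteq> S"
      using Limg Aimg by (subst path_image_join) (auto simp: L_def arc_finish)
    show "pathfinish (L +++ reversepath (arc R)) = pathstart (L +++ reversepath (arc R))"
      by (simp add: L_def arc_start)
  qed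
  then have "contour_integral (L +++ reversepath (arc R)) f = 0" by (rule contour_integral_unique)
  moreover have "contour_integral (L +++ reversepath (arc R)) f = contour_integral L f - contour_integral (arc R) f"
  proof -
    have iL: "f contour_integrable_on L" by (rule contour_integrable_holomorphic_simple[OF hol oS vL Limg])
    have iA: "f contour_integrable_on (arc R)" by (rule contour_integrable_holomorphic_simple[OF hol oS arc_valid Aimg])
    have iA': "f contour_integrable_on reversepath (arc R)"
      using iA contour_integrable_reversepath arc_valid by blast
    show ?thesis
      by (subst contour_integral_join[OF iL iA' vL]) (auto simp: arc_valid contour_integral_reversepath)
  qed
  ultimately show ?thesis by (simp add: f_def L_def)
qed

end


context poi begin

definition G :: "real \<Rightarrow> complex \<Rightarrow> complex" where
  "G R z = (1/(2*\<i>)) * contour_integral (arc R) (\<lambda>w. h w / (w - \<i>*z)) + z * integral {R..} (pf h z)"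

lemma G_hol: "R \<ge> y0 \<Longrightarrow> G R holomorphic_on ball 0 R"
  unfolding G_def using y0
  by (intro holomorphic_intros arc_hol tail_hol) auto

lemma absint: "Re z > 0 \<Longrightarrow> pf h z absolutely_integrable_on {0..}"
proof -
  assume z: "Re z > 0"
  define R where "R = norm z + y0 + 1"
  have "pf h z absolutely_integrable_on ({0..R} \<union> {R..})"
  proof (rule absolutely_integrable_Un)
    show "pf h z absolutely_integrable_on {0..R}"
      by (intro absolutely_integrable_continuous_real pf_cont den_nz_Re) (use z in auto)
    show "pf h z absolutely_integrable_on {R..}"
      by (rule tail_absint) (use y0 in \<open>auto simp: R_def\<close>)
  qed
  moreover have "R \<ge> 0" using y0 norm_ge_zero[of z] unfolding R_def by linarith
  then have "{0..R} \<union> {R..} = {0..}" by auto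
  ultimately show ?thesis by simp
qed

lemma P_eq: "poisson_transform h z = z * integral {0..} (pf h z)"
  by (simp add: poisson_transform_def pf_def)

lemma G_eq:
  assumes R: "R \<ge> y0" and z: "Re z > 0" "norm z < R"
  shows "G R z = poisson_transform h z"
proof -
  have R0: "R > 0" using R y0 by linarith
  have "(pf h z has_integral (integral {0..R} (pf h z) + integral {R..} (pf h z))) {0..}"
  proof (rule int_split)
    show "pf h z integrable_on {0..R}"
      by (intro integrable_continuous_interval pf_cont den_nz_Re) (use z in auto)
    show "pf h z integrable_on {R..}" by (rule tail_int) (use R z in auto)
  qed (use R0 in auto)
  then have "integral {0..} (pf h z) = integral {0..R} (pf h z) + integral {R..} (pf h z)"
    by (rule integral_unique)
  then have "poisson_transform h z = z * integral {0..R} (pf h z) + z * integral {R..} (pf h z)"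
    by (simp add: P_eq distrib_left)
  also have "z * integral {0..R} (pf h z) = (1/(2*\<i>)) * contour_integral (arc R) (\<lambda>w. h w / (w - \<i>*z))"
    using line_eq[OF z(1) R0] cauchy_eq[OF z(1) R0] by simp
  finally show ?thesis by (simp add: G_def)
qed

lemma G_cons:
  assumes "R1 \<ge> y0" "R2 \<ge> y0" "norm z < min R1 R2"
  shows "G R1 z = G R2 z"
proof -
  define m where "m = min R1 R2"
  have m0: "m > 0" using assms y0 by (simp add: m_def)
  show ?thesis
  proof (rule analytic_continuation_open[where s="ball 0 m \<inter> {w. Re w > 0}" and s'="ball 0 m" and f="G R1" and g="G R2"])
    show "open (ball 0 m \<inter> {w. Re w > 0})" by (intro open_Int open_ball open_halfspace_Re_gt)
    show "ball 0 m \<inter> {w. Re w > 0} \<noteq> {}"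
    proof -
      have "complex_of_real (m/2) \<in> ball 0 m \<inter> {w. Re w > 0}" using m0 by simp
      then show ?thesis by blast
    qed
    show "G R1 holomorphic_on ball 0 m"
      using G_hol[OF assms(1)] by (rule holomorphic_on_subset) (auto simp: m_def)
    show "G R2 holomorphic_on ball 0 m"
      using G_hol[OF assms(2)] by (rule holomorphic_on_subset) (auto simp: m_def)
    show "G R1 w = G R2 w" if "w \<in> ball 0 m \<inter> {w. Re w > 0}" for w
      using that G_eq[OF assms(1), of w] G_eq[OF assms(2), of w] by (auto simp: m_def)
  qed (use assms in \<open>auto simp: m_def\<close>)
qed

definition g :: "complex \<Rightarrow> complex" where "g z = G (norm z + y0 + 1) z"

lemma g_hol: "g holomorphic_on UNIV"
proof -
  have "g field_differentiable at z0" for z0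
  proof -
    define R0 where "R0 = norm z0 + y0 + 1"
    have R0: "R0 \<ge> y0" using y0 by (simp add: R0_def)
    have "g holomorphic_on ball 0 R0"
    proof (rule holomorphic_transform[OF G_hol[OF R0]])
      fix z :: complex assume "z \<in> ball 0 R0"
      then show "G R0 z = g z" unfolding g_def
        by (intro G_cons) (use R0 y0 in auto)
    qed
    moreover have "z0 \<in> ball 0 R0" using y0 by (simp add: R0_def)
    ultimately show ?thesis using holomorphic_on_imp_differentiable_at by blast
  qed
  then show ?thesis by (simp add: holomorphic_on_open field_differentiable_def)
qed

lemma g_eq: "Re z > 0 \<Longrightarrow> g z = poisson_transform h z"
  unfolding g_def by (rule G_eq) (use y0 in auto)

end

theorem lemma1:
  fixes h :: "complex \<Rightarrow> complex" and \<theta> K y0 :: real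
  assumes entire: "h holomorphic_on UNIV"
    and even: "\<And>z. h (- z) = h z"
    and theta: "\<theta> < 1" and K: "K > 0" and y0: "y0 > 0"
    and bound: "\<And>y::real. y \<ge> y0 \<Longrightarrow> norm (h (complex_of_real y)) \<le> K * y powr \<theta>"
  shows "(\<forall>z. Re z > 0 \<longrightarrow>
            (\<lambda>y::real. h (complex_of_real y) / ((complex_of_real y)\<^sup>2 + z\<^sup>2))
              absolutely_integrable_on {0..})
       \<and> poisson_transform h holomorphic_on {z. Re z > 0}
       \<and> (\<exists>g. g holomorphic_on UNIV \<and> (\<forall>z. Re z > 0 \<longrightarrow> g z = poisson_transform h z))"
proof -
  interpret P: poi h \<theta> K y0
    by unfold_locales (use assms in auto)
  have a: "\<forall>z. Re z > 0 \<longrightarrow>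
            (\<lambda>y::real. h (complex_of_real y) / ((complex_of_real y)\<^sup>2 + z\<^sup>2))
              absolutely_integrable_on {0..}"
    using P.absint unfolding pf_def by blast
  have b: "poisson_transform h holomorphic_on {z. Re z > 0}"
    by (rule holomorphic_transform[OF holomorphic_on_subset[OF P.g_hol]]) (auto simp: P.g_eq)
  show ?thesis using a b P.g_hol P.g_eq by blast
qed

end
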